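(* Assume the standing hypotheses described in the context. If $x,y\in\mathbb X$ and $\|x-x_0\|+\|y-x\|<R$, then \[\|F'(x_0)^{-1}E_F(y,x)\|\le e_f(\|x-x_0\|+\|y-x\|,\ \|x-x_0\|).\]
   Context: Standing hypotheses: $\mathbb X,\mathbb Y$ are Banach spaces; $B(x,r)$ is the open ball. $R\in\mathbb R$, $C\subseteq\mathbb X$, $F:C\to\mathbb Y$ is continuous and continuously differentiable on $\mathrm{int}(C)$, $x_0\in\mathrm{int}(C)$ with $F'(x_0)$ non-singular, $f:[0,R)\to\mathbb R$ is continuously differentiable, $B(x_0,R)\subseteq C$, $\|F'(x_0)^{-1}[F'(y)-F'(x)]\|\le f'(\|y-x\|+\|x-x_0\|)-f'(\|x-x_0\|)$ for all $x,y\in B(x_0,R)$ with $\|x-x_0\|+\|y-x\|<R$, $\|F'(x_0)^{-1}F(x_0)\|\le f(0)$, and (h1) $f(0)>0$, $f'(0)=-1$; (h2) $f'$ is strictly increasing and convex; (h3) $f(t)<0$ for some $t\in(0,R)$. Linearization errors: $E_F(y,x):=F(y)-[F(x)+F'(x)(y-x)]$ for $x\in B(x_0,R)$, $y\in C$; $e_f(v,t):=f(v)-[f(t)+f'(t)(v-t)]$ for $t,v\in[0,R)$. *)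

theory Defs
  imports "HOL-Analysis.Analysis"
begin

definition EF :: "('a::real_normed_vector \<Rightarrow> 'b::real_normed_vector) \<Rightarrow> ('a \<Rightarrow> ('a \<Rightarrow>\<^sub>L 'b)) \<Rightarrow> 'a \<Rightarrow> 'a \<Rightarrow> 'b"
  where "EF F F' y x = F y - (F x + blinfun_apply (F' x) (y - x))"

definition ef :: "(real \<Rightarrow> real) \<Rightarrow> (real \<Rightarrow> real) \<Rightarrow> real \<Rightarrow> real \<Rightarrow> real"
  where "ef f f' v t = f v - (f t + f' t * (v - t))"

end

theory Submission
  imports Defs
begin

theorem lemma3p2:
  fixes F :: "'a::banach \<Rightarrow> 'b::banach"
    and F' :: "'a \<Rightarrow> ('a \<Rightarrow>\<^sub>L 'b)"
    and Finv :: "'b \<Rightarrow>\<^sub>L 'a"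
    and C :: "'a set" and x0 :: 'a and R :: real
    and f f' :: "real \<Rightarrow> real"
    and x y :: 'a
  assumes F_cont: "continuous_on C F"
    and F_deriv: "\<forall>z\<in>interior C. (F has_derivative blinfun_apply (F' z)) (at z)"
    and F'_cont: "continuous_on (interior C) F'"
    and x0_int: "x0 \<in> interior C"
    and Finv_left: "Finv o\<^sub>L F' x0 = id_blinfun"
    and Finv_right: "F' x0 o\<^sub>L Finv = id_blinfun"
    and f_deriv: "\<forall>t\<in>{0..<R}. (f has_real_derivative f' t) (at t within {0..<R})"
    and f'_cont: "continuous_on {0..<R} f'"
    and ball_sub: "ball x0 R \<subseteq> C"
    and majorant: "\<forall>u\<in>ball x0 R. \<forall>v\<in>ball x0 R. norm (u - x0) + norm (v - u) < R \<longrightarrow>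
        norm (Finv o\<^sub>L (F' v - F' u)) \<le> f' (norm (v - u) + norm (u - x0)) - f' (norm (u - x0))"
    and init: "norm (Finv (F x0)) \<le> f 0"
    and h1a: "f 0 > 0" and h1b: "f' 0 = -1"
    and h2a: "strict_mono_on {0..<R} f'" and h2b: "convex_on {0..<R} f'"
    and h3: "\<exists>t\<in>{0<..<R}. f t < 0"
    and xy: "norm (x - x0) + norm (y - x) < R"
  shows "norm (Finv (EF F F' y x)) \<le> ef f f' (norm (x - x0) + norm (y - x)) (norm (x - x0))"
proof -
  define a where "a = norm (x - x0)"
  define d where "d = norm (y - x)"
  define v where "v = y - x"
  define z where "z = (\<lambda>t::real. x + t *\<^sub>R v)"
  have a0: "a \<ge> 0" "d \<ge> 0" unfolding a_def d_def by auto
  have ad: "a + d < R" using xy a_def d_def by simp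
  have nz: "norm (z t - x0) \<le> a + t * d" if "t \<in> {0..1}" for t
  proof -
    have "norm (z t - x0) = norm ((x - x0) + t *\<^sub>R v)" unfolding z_def by (simp add: algebra_simps)
    also have "\<dots> \<le> a + norm (t *\<^sub>R v)" unfolding a_def by (rule norm_triangle_ineq)
    also have "norm (t *\<^sub>R v) = t * d" using that unfolding d_def v_def by simp
    finally show ?thesis .
  qed
  have zball: "z t \<in> ball x0 R" if "t \<in> {0..1}" for t
  proof -
    have "t * d \<le> d" using that a0 by (simp add: mult_left_le_one_le)
    then show ?thesis using nz[OF that] ad by (simp add: dist_norm norm_minus_commute)
  qed
  have ballint: "ball x0 R \<subseteq> interior C"
    using ball_sub by (simp add: interior_maximal)
  have xball: "x \<in> ball x0 R" using zball[of 0] by (simp add: z_def)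
  have zx: "norm (z t - x) = t * d" if "t \<in> {0..1}" for t
    using that unfolding z_def d_def v_def by simp
  define G where "G = (\<lambda>t. Finv (F (z t)) - t *\<^sub>R Finv (F' x v))"
  define G' where "G' = (\<lambda>t. Finv ((F' (z t) - F' x) v))"
  define H where "H = (\<lambda>t. f (a + t * d) - t * (d * f' a))"
  define H' where "H' = (\<lambda>t. d * f' (a + t * d) - d * f' a)"
  have Gd: "(G has_vector_derivative G' t) (at t within {0..1})" if t: "t \<in> {0..1}" for t
  proof -
    have zt: "z t \<in> interior C" using zball[OF t] ballint by auto
    have dz: "(z has_derivative (\<lambda>s. s *\<^sub>R v)) (at t within {0..1})"
      unfolding z_def by (auto intro!: derivative_eq_intros)
    have dF: "(F has_derivative blinfun_apply (F' (z t))) (at (z t))" using F_deriv zt by auto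
    have "((\<lambda>s. F (z s)) has_derivative (\<lambda>s. blinfun_apply (F' (z t)) (s *\<^sub>R v))) (at t within {0..1})"
      using has_derivative_compose[OF dz dF] by (simp add: o_def)
    then have "((\<lambda>s. Finv (F (z s))) has_derivative (\<lambda>s. Finv (blinfun_apply (F' (z t)) (s *\<^sub>R v)))) (at t within {0..1})"
      by (rule bounded_linear.has_derivative[OF blinfun.bounded_linear_right])
    moreover have "((\<lambda>s. s *\<^sub>R Finv (F' x v)) has_derivative (\<lambda>s. s *\<^sub>R Finv (F' x v))) (at t within {0..1})"
      by (auto intro!: derivative_eq_intros)
    ultimately have "(G has_derivative (\<lambda>s. Finv (blinfun_apply (F' (z t)) (s *\<^sub>R v)) - s *\<^sub>R Finv (F' x v))) (at t within {0..1})"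
      unfolding G_def by (rule has_derivative_diff)
    then show ?thesis unfolding has_vector_derivative_def G'_def
      by (simp add: blinfun.scaleR_right blinfun.diff_left blinfun.diff_right scaleR_right_diff_distrib)
  qed
  have Hd: "(H has_vector_derivative H' t) (at t within {0..1})" if t: "t \<in> {0..1}" for t
  proof -
    have "t * d \<le> d" using t a0 by (simp add: mult_left_le_one_le)
    then have inR: "a + t * d \<in> {0..<R}" using t a0 ad by auto
    have df: "(f has_real_derivative f' (a + t * d)) (at (a + t * d) within {0..<R})"
      using f_deriv inR by auto
    have img: "(\<lambda>s. a + s * d) ` {0..1} \<subseteq> {0..<R}"
    proof
      fix w assume "w \<in> (\<lambda>s. a + s * d) ` {0..1}"
      then obtain s where s: "s \<in> {0..1}" "w = a + s * d" by auto
      have "s * d \<le> d" using s a0 by (simp add: mult_left_le_one_le)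
      then show "w \<in> {0..<R}" using s a0 ad by auto
    qed
    have df2: "(f has_real_derivative f' (a + t * d)) (at (a + t * d) within (\<lambda>s. a + s * d) ` {0..1})"
      using has_field_derivative_subset[OF df img] .
    have dl: "((\<lambda>s. a + s * d) has_real_derivative d) (at t within {0..1})"
      by (auto intro!: derivative_eq_intros)
    have "((\<lambda>s. f (a + s * d)) has_real_derivative f' (a + t * d) * d) (at t within {0..1})"
      using DERIV_image_chain[OF df2 dl] by (simp add: o_def)
    then have "(H has_real_derivative f' (a + t * d) * d - d * f' a) (at t within {0..1})"
      unfolding H_def by (auto intro!: derivative_eq_intros)
    then show ?thesis unfolding H'_def
      by (simp add: has_real_derivative_iff_has_vector_derivative mult.commute)
  qed
  have GI: "(G' has_integral (G 1 - G 0)) {0..1}"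
    by (rule fundamental_theorem_of_calculus) (auto intro: Gd)
  have HI: "(H' has_integral (H 1 - H 0)) {0..1}"
    by (rule fundamental_theorem_of_calculus) (auto intro: Hd)
  have bound: "norm (G' t) \<le> H' t" if t: "t \<in> {0..1}" for t
  proof -
    have "norm (G' t) = norm (blinfun_apply (Finv o\<^sub>L (F' (z t) - F' x)) v)"
      unfolding G'_def by simp
    also have "\<dots> \<le> norm (Finv o\<^sub>L (F' (z t) - F' x)) * d"
      unfolding d_def v_def by (rule norm_blinfun)
    also have "\<dots> \<le> (f' (t * d + a) - f' a) * d"
    proof (rule mult_right_mono)
      have "a + t * d \<le> a + d" using t a0 by (simp add: mult_left_le_one_le)
      then have "norm (x - x0) + norm (z t - x) < R" using zx[OF t] ad a_def by simp
      then show "norm (Finv o\<^sub>L (F' (z t) - F' x)) \<le> f' (t * d + a) - f' a"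
        using majorant[rule_format, OF xball zball[OF t]] zx[OF t] a_def by simp
    qed (use a0 in auto)
    also have "\<dots> = H' t" unfolding H'_def by (simp add: algebra_simps)
    finally show ?thesis .
  qed
  have "norm (G 1 - G 0) \<le> (H 1 - H 0) \<bullet> 1"
    by (rule has_integral_norm_bound_integral_component[OF GI HI]) (use bound in auto)
  moreover have "G 1 - G 0 = Finv (EF F F' y x)"
    unfolding G_def EF_def z_def v_def
    by (simp add: blinfun.diff_right blinfun.add_right)
  moreover have "H 1 - H 0 = ef f f' (norm (x - x0) + norm (y - x)) (norm (x - x0))"
    unfolding H_def ef_def a_def d_def by (simp add: algebra_simps)
  ultimately show ?thesis by simp
qed

end
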